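(* If a natural number $m$ occurs twice in $(a(n))_{n\ge0}$, say $a(x)=a(y)=m$ with $x<y$, then $y=x+1$.
   Context: $\mathbb{N}=\{0,1,2,\ldots\}$. Let $(F_n)_{n\ge 0}$ be the Fibonacci numbers: $F_0=0$, $F_1=1$, $F_n=F_{n-1}+F_{n-2}$ for $n\ge 2$. Define $(a(n))_{n\ge 0}$ (OEIS A105774) by $a(0)=0$, $a(1)=1$, and for $n\ge 2$, $a(n)=F_{j+1}-a(n-F_j)$, where $j\ge 2$ is the unique index with $F_j<n\le F_{j+1}$. *)

theory Defs
  imports Main "HOL-Number_Theory.Fib"
begin

text \<open>The unique index j \<ge> 2 with F_j < n \<le> F_(j+1) (meaningful for n \<ge> 2).\<close>
definition fib_idx :: "nat \<Rightarrow> nat" where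
  "fib_idx n = (THE j. 2 \<le> j \<and> fib j < n \<and> n \<le> fib (Suc j))"

text \<open>OEIS A105774. Values taken in int so that the subtraction is the true one.\<close>
function a :: "nat \<Rightarrow> int" where
  "a n = (if n \<le> 1 then int n
          else int (fib (Suc (fib_idx n))) - a (n - fib (fib_idx n)))"
  by auto
termination
proof (relation "measure id")
  show "wf (measure id)" by simp
next
  fix n :: nat
  assume "\<not> n \<le> 1"
  then have n2: "2 \<le> n" by simp
  have ex: "\<exists>j. 2 \<le> j \<and> fib j < n \<and> n \<le> fib (Suc j)"
  proof -
    have "\<exists>k. n \<le> fib k"
    proof
      show "n \<le> fib (Suc (Suc n))"
      proof (induction n)
        case 0 then show ?case by simp
      next
        case (Suc m)
        have "fib (Suc m) \<ge> 1" using fib_mono[of 1 "Suc m"] by simp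
        then show ?case using Suc by simp
      qed
    qed
    define k where "k = (LEAST k. n \<le> fib k)"
    have kP: "n \<le> fib k" unfolding k_def by (rule LeastI_ex) fact
    have k3: "k \<ge> 3"
    proof (rule ccontr)
      assume "\<not> k \<ge> 3"
      then have "k \<in> {0,1,2}" by auto
      then show False using kP n2 by (auto simp: numeral_2_eq_2)
    qed
    then obtain j where kj: "k = Suc j" and j2: "2 \<le> j" by (cases k) auto
    have "\<not> n \<le> fib j" using not_less_Least[of j "\<lambda>k. n \<le> fib k"] kj k_def by auto
    then show ?thesis using kP kj j2 by auto
  qed
  have P: "2 \<le> fib_idx n \<and> fib (fib_idx n) < n \<and> n \<le> fib (Suc (fib_idx n))"
  proof -
    have uq: "\<And>i j. 2 \<le> i \<Longrightarrow> fib i < n \<Longrightarrow> n \<le> fib (Suc i) \<Longrightarrow>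
                 2 \<le> j \<Longrightarrow> fib j < n \<Longrightarrow> n \<le> fib (Suc j) \<Longrightarrow> i = j"
    proof -
      fix i j assume h: "2 \<le> i" "fib i < n" "n \<le> fib (Suc i)" "2 \<le> j" "fib j < n" "n \<le> fib (Suc j)"
      show "i = j"
      proof (rule ccontr)
        assume "i \<noteq> j"
        then have "Suc i \<le> j \<or> Suc j \<le> i" by auto
        then show False using h fib_mono[of "Suc i" j] fib_mono[of "Suc j" i] by auto
      qed
    qed
    have "\<exists>!j. 2 \<le> j \<and> fib j < n \<and> n \<le> fib (Suc j)"
      using ex uq by blast
    then show ?thesis unfolding fib_idx_def by (rule theI')
  qed
  have "fib (fib_idx n) \<ge> 1"
  proof -
    have "fib 2 \<le> fib (fib_idx n)" using P fib_mono by blast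
    then show ?thesis by (simp add: numeral_2_eq_2)
  qed
  then show "(n - fib (fib_idx n), n) \<in> measure id" using P by simp
qed

declare a.simps[simp del]

end

theory Submission
  imports Defs
begin

lemma fib_lt_imp: "fib j < fib i \<Longrightarrow> j < i"
  using fib_mono[of i j] by (cases "i \<le> j") auto

lemma fib_idx_ex: "2 \<le> (n::nat) \<Longrightarrow> \<exists>j. 2 \<le> j \<and> fib j < n \<and> n \<le> fib (Suc j)"
proof -
  assume n2: "2 \<le> n"
  have "\<exists>k. n \<le> fib k"
  proof
    show "n \<le> fib (Suc (Suc n))"
    proof (induction n)
      case 0 then show ?case by simp
    next
      case (Suc m)
      have "fib (Suc m) \<ge> 1" using fib_mono[of 1 "Suc m"] by simp
      then show ?case using Suc by simp
    qed
  qed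
  define k where "k = (LEAST k. n \<le> fib k)"
  have kP: "n \<le> fib k" unfolding k_def by (rule LeastI_ex) fact
  have k3: "k \<ge> 3"
  proof (rule ccontr)
    assume "\<not> k \<ge> 3"
    then have "k \<in> {0,1,2}" by auto
    then show False using kP n2 by (auto simp: numeral_2_eq_2)
  qed
  then obtain j where kj: "k = Suc j" and j2: "2 \<le> j" by (cases k) auto
  have "\<not> n \<le> fib j" using not_less_Least[of j "\<lambda>k. n \<le> fib k"] kj k_def by auto
  then show ?thesis using kP kj j2 by auto
qed

lemma fib_idx_uniq:
  assumes "2 \<le> j" "fib j < n" "n \<le> fib (Suc j)"
  shows "fib_idx n = j"
proof -
  have uq: "\<And>i. 2 \<le> i \<Longrightarrow> fib i < n \<Longrightarrow> n \<le> fib (Suc i) \<Longrightarrow> i = j"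
  proof -
    fix i assume h: "2 \<le> i" "fib i < n" "n \<le> fib (Suc i)"
    have "i < Suc j" using fib_lt_imp[of i "Suc j"] h assms by simp
    moreover have "j < Suc i" using fib_lt_imp[of j "Suc i"] h assms by simp
    ultimately show "i = j" by simp
  qed
  show ?thesis unfolding fib_idx_def
  proof (rule the_equality)
    show "2 \<le> j \<and> fib j < n \<and> n \<le> fib (Suc j)" using assms by simp
  next
    fix i assume "2 \<le> i \<and> fib i < n \<and> n \<le> fib (Suc i)"
    then show "i = j" using uq by blast
  qed
qed

lemma fib_idx_P:
  assumes "2 \<le> n"
  shows "2 \<le> fib_idx n \<and> fib (fib_idx n) < n \<and> n \<le> fib (Suc (fib_idx n))"
proof -
  obtain j where "2 \<le> j \<and> fib j < n \<and> n \<le> fib (Suc j)" using fib_idx_ex[OF assms] by blast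
  then show ?thesis using fib_idx_uniq[of j n] by auto
qed

lemma a_rec: "2 \<le> n \<Longrightarrow> a n = int (fib (Suc (fib_idx n))) - a (n - fib (fib_idx n))"
  by (subst a.simps) simp

lemma a0: "a 0 = 0" by (subst a.simps) simp
lemma a1: "a 1 = 1" by (subst a.simps) simp
lemma a2: "a 2 = 1"
proof -
  have "fib_idx 2 = 2" by (rule fib_idx_uniq) (auto simp: numeral_2_eq_2)
  then show ?thesis using a_rec[of 2] a1 by (simp add: numeral_2_eq_2)
qed
lemma a3: "a 3 = 2"
proof -
  have "fib_idx 3 = 3" by (rule fib_idx_uniq) (auto simp: numeral_3_eq_3)
  then show ?thesis using a_rec[of 3] a1 by (simp add: numeral_3_eq_3)
qed

lemma boundQ: "1 \<le> n \<Longrightarrow> 1 \<le> a n \<and> (\<forall>i\<ge>3. n \<le> fib i \<longrightarrow> a n < int (fib i))"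
proof (induction n rule: less_induct)
  case (less n)
  show ?case
  proof (cases "n = 1")
    case True
    have "\<forall>i\<ge>3. a 1 < int (fib i)"
    proof (intro allI impI)
      fix i :: nat assume "3 \<le> i"
      then have "fib 3 \<le> fib i" by (rule fib_mono)
      then show "a 1 < int (fib i)" using a1 by (simp add: numeral_3_eq_3)
    qed
    then show ?thesis using True a1 by simp
  next
    case False
    then have n2: "2 \<le> n" using less.prems by simp
    define j where "j = fib_idx n"
    have P: "2 \<le> j" "fib j < n" "n \<le> fib (Suc j)" using fib_idx_P[OF n2] j_def by auto
    define k where "k = n - fib j"
    have fj: "fib j \<ge> 1" using fib_mono[of 2 j] P by simp
    have k1: "1 \<le> k" "k < n" using P fj k_def by auto
    have an: "a n = int (fib (Suc j)) - a k" using a_rec[OF n2] j_def k_def by simp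
    have IH: "1 \<le> a k \<and> (\<forall>i\<ge>3. k \<le> fib i \<longrightarrow> a k < int (fib i))"
      using less.IH[OF k1(2) k1(1)] .
    have "k \<le> fib (Suc j)" using k_def P by simp
    then have "a k < int (fib (Suc j))" using IH P by auto
    then have lo: "1 \<le> a n" using an by simp
    have "\<forall>i\<ge>3. n \<le> fib i \<longrightarrow> a n < int (fib i)"
    proof (intro allI impI)
      fix i :: nat assume "3 \<le> i" "n \<le> fib i"
      then have "j < i" using fib_lt_imp[of j i] P by simp
      then have "fib (Suc j) \<le> fib i" by (intro fib_mono) simp
      then show "a n < int (fib i)" using an IH by simp
    qed
    then show ?thesis using lo by simp
  qed
qed

lemma range4:
  assumes "4 \<le> n"
  shows "4 \<le> fib_idx n \<and> int (fib (fib_idx n)) < a n \<and> a n < int (fib (Suc (fib_idx n)))"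
proof -
  have n2: "2 \<le> n" using assms by simp
  define j where "j = fib_idx n"
  have P: "2 \<le> j" "fib j < n" "n \<le> fib (Suc j)" using fib_idx_P[OF n2] j_def by auto
  have j4: "4 \<le> j"
  proof (rule ccontr)
    assume "\<not> 4 \<le> j"
    then have "Suc j \<le> 4" by simp
    then have "fib (Suc j) \<le> fib 4" by (rule fib_mono)
    then show False using P assms by (simp add: eval_nat_numeral)
  qed
  define k where "k = n - fib j"
  have fj: "fib j \<ge> 1" using fib_mono[of 2 j] P by simp
  have k1: "1 \<le> k" using P fj k_def by auto
  have an: "a n = int (fib (Suc j)) - a k" using a_rec[OF n2] j_def k_def by simp
  obtain i where ji: "j = Suc i" using P by (cases j) auto
  have fs: "fib (Suc j) = fib j + fib i" using ji by simp
  have kle: "k \<le> fib i" using k_def P fs by simp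
  have Q: "1 \<le> a k \<and> (\<forall>i\<ge>3. k \<le> fib i \<longrightarrow> a k < int (fib i))" using boundQ[OF k1] .
  have "a k < int (fib i)" using Q kle j4 ji by auto
  then show ?thesis using an Q fs j_def j4 by simp
qed

theorem proposition2:
  fixes m :: nat and x y :: nat
  assumes "a x = int m" and "a y = int m" and "x < y"
  shows "y = x + 1"
proof -
  have main: "\<And>x. x < y \<Longrightarrow> a x = a y \<Longrightarrow> y = x + 1"
  proof (induction y rule: less_induct)
    case (less y x)
    show ?case
    proof (cases "y \<le> 3")
      case True
      then have "y \<in> {1,2,3}" using less.prems by auto
      moreover have "x \<in> {0,1,2}" using less.prems True by auto
      ultimately show ?thesis using less.prems a0 a1 a2 a3 by auto
    next
      case False
      then have y4: "4 \<le> y" by simp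
      have Ry: "4 \<le> fib_idx y \<and> int (fib (fib_idx y)) < a y \<and> a y < int (fib (Suc (fib_idx y)))"
        using range4[OF y4] .
      have f4: "3 \<le> fib (fib_idx y)" using fib_mono[of 4 "fib_idx y"] Ry by (simp add: eval_nat_numeral)
      show ?thesis
      proof (cases "x \<le> 3")
        case True
        then have "x \<in> {0,1,2,3}" by auto
        then have "a x \<le> 2" using a0 a1 a2 a3 by auto
        then show ?thesis using Ry f4 less.prems by simp
      next
        case False
        then have x4: "4 \<le> x" by simp
        have Rx: "4 \<le> fib_idx x \<and> int (fib (fib_idx x)) < a x \<and> a x < int (fib (Suc (fib_idx x)))"
          using range4[OF x4] .
        have Px: "fib (fib_idx x) < x" "x \<le> fib (Suc (fib_idx x))" using fib_idx_P[of x] x4 by auto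
        have Py: "fib (fib_idx y) < y" "y \<le> fib (Suc (fib_idx y))" using fib_idx_P[of y] y4 by auto
        have "fib (fib_idx x) < fib (Suc (fib_idx y))" using Px Py less.prems by simp
        then have le: "fib_idx x \<le> fib_idx y" using fib_lt_imp by fastforce
        show ?thesis
        proof (cases "fib_idx x = fib_idx y")
          case False
          then have "Suc (fib_idx x) \<le> fib_idx y" using le by simp
          then have "fib (Suc (fib_idx x)) \<le> fib (fib_idx y)" by (rule fib_mono)
          then show ?thesis using Rx Ry less.prems by simp
        next
          case True
          define F where "F = fib (fib_idx y)"
          have ax: "a x = int (fib (Suc (fib_idx y))) - a (x - F)"
            using a_rec[of x] x4 True F_def by simp
          have ay: "a y = int (fib (Suc (fib_idx y))) - a (y - F)"
            using a_rec[of y] y4 F_def by simp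
          have e: "a (x - F) = a (y - F)" using ax ay less.prems by simp
          have "F < x" using Px True F_def by simp
          then have "x - F < y - F" "y - F < y" using less.prems F_def f4 by auto
          then have "y - F = x - F + 1" using less.IH e by blast
          then show ?thesis using \<open>F < x\<close> less.prems by simp
        qed
      qed
    qed
  qed
  show ?thesis using main assms by simp
qed

end
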